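(* Let $\alpha>0$, $\beta>0$, $D>0$, $T\ge1$, $X=[-D/2,D/2]\subseteq\mathbb R$ and $x_0=0$. For $\theta=(\theta_1,\dots,\theta_T)'\in X^T$ let $f_t(x)=\frac\alpha2(x-\theta_t)^2$ and $$C_1^T(x)=\sum_{t=1}^T\Big(f_t(x_t)+\frac\beta2(x_t-x_{t-1})^2\Big).$$ Then for any $\theta\in X^T$ there exists a matrix $A=(a_{t,s})\in\mathbb R^{T\times T}$ such that $x^*=A\theta$, where $x^*=\arg\min_{x\in X^T}C_1^T(x)$. Moreover, the entries of $A$ satisfy $$a_{t,t+\tau}\ge\frac{\alpha}{\alpha+\beta}(1-\rho)\rho^{\tau}$$ for all $t$ and all $\tau\ge0$ with $t+\tau\le T$, where $Q_f=\frac{\alpha+4\beta}{\alpha}$ and $\rho=\frac{\sqrt{Q_f}-1}{\sqrt{Q_f}+1}$. *)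

theory Defs
  imports Complex_Main
begin

text \<open>Vectors in R^T are represented as functions nat \<Rightarrow> real, indexed by 1..T;
  the initial point x_0 = 0 is fixed inside the cost.\<close>

definition cost :: "real \<Rightarrow> real \<Rightarrow> nat \<Rightarrow> (nat \<Rightarrow> real) \<Rightarrow> (nat \<Rightarrow> real) \<Rightarrow> real" where
  "cost \<alpha> \<beta> T \<theta> x =
     (\<Sum>t=1..T. \<alpha>/2 * (x t - \<theta> t)^2
                + \<beta>/2 * (x t - (if t = 1 then 0 else x (t - 1)))^2)"

definition in_box :: "real \<Rightarrow> nat \<Rightarrow> (nat \<Rightarrow> real) \<Rightarrow> bool" where
  "in_box D T x \<longleftrightarrow> (\<forall>t\<in>{1..T}. x t \<in> {-D/2..D/2})"

definition is_argmin :: "real \<Rightarrow> real \<Rightarrow> real \<Rightarrow> nat \<Rightarrow> (nat \<Rightarrow> real) \<Rightarrow> (nat \<Rightarrow> real) \<Rightarrow> bool" where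
  "is_argmin \<alpha> \<beta> D T \<theta> x \<longleftrightarrow>
     in_box D T x \<and> (\<forall>y. in_box D T y \<longrightarrow> cost \<alpha> \<beta> T \<theta> x \<le> cost \<alpha> \<beta> T \<theta> y)"

definition matvec :: "nat \<Rightarrow> (nat \<Rightarrow> nat \<Rightarrow> real) \<Rightarrow> (nat \<Rightarrow> real) \<Rightarrow> nat \<Rightarrow> real" where
  "matvec T A \<theta> = (\<lambda>t. \<Sum>s=1..T. A t s * \<theta> s)"

end

theory Submission
  imports Defs
begin

definition ext :: "(nat \<Rightarrow> real) \<Rightarrow> nat \<Rightarrow> real" where
  "ext x t = (if t = 0 then 0 else x t)"

definition res :: "real \<Rightarrow> real \<Rightarrow> nat \<Rightarrow> (nat \<Rightarrow> real) \<Rightarrow> nat \<Rightarrow> real" where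
  "res a b T x t = (if t < T then (a + 2*b) * x t - b * ext x (t-1) - b * x (t+1)
                    else (a + b) * x t - b * ext x (t-1))"

definition Qf :: "real \<Rightarrow> real \<Rightarrow> nat \<Rightarrow> (nat \<Rightarrow> real) \<Rightarrow> real" where
  "Qf a b T d = (\<Sum>t=1..T. a/2 * (d t)^2 + b/2 * (d t - ext d (t-1))^2)"

lemma cost_alt:
  "cost a b T th x = (\<Sum>t=1..T. a/2 * (x t - th t)^2 + b/2 * (x t - ext x (t-1))^2)"
  unfolding cost_def ext_def by (rule sum.cong) auto

lemma sbp:
  "(\<Sum>t=1..T. g t * (d t - ext d (t-1))) =
   (\<Sum>t=1..T. d t * (g t - (if t < T then g (t+1) else 0)))"
proof (induction T)
  case 0
  then show ?case by simp
next
  case (Suc T)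
  show ?case
  proof (cases "T = 0")
    case True
    then show ?thesis by (simp add: ext_def)
  next
    case False
    have e: "ext d T = d T" using False by (simp add: ext_def)
    have "(\<Sum>t=1..Suc T. d t * (g t - (if t < Suc T then g (t+1) else 0)))
        = (\<Sum>t=1..T. d t * (g t - (if t < Suc T then g (t+1) else 0))) + d (Suc T) * g (Suc T)"
      by simp
    also have "(\<Sum>t=1..T. d t * (g t - (if t < Suc T then g (t+1) else 0)))
        = (\<Sum>t=1..T. d t * (g t - (if t < T then g (t+1) else 0))) - d T * g (Suc T)"
    proof -
      have "(\<Sum>t=1..T. d t * (g t - (if t < Suc T then g (t+1) else 0)))
          = (\<Sum>t=1..T. d t * (g t - (if t < T then g (t+1) else 0)) - (if t = T then d T * g (Suc T) else 0))"
        by (rule sum.cong) (auto simp: algebra_simps)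
      also have "\<dots> = (\<Sum>t=1..T. d t * (g t - (if t < T then g (t+1) else 0))) - (\<Sum>t=1..T. (if t = T then d T * g (Suc T) else 0))"
        by (simp add: sum_subtractf)
      also have "(\<Sum>t=1..T. (if t = T then d T * g (Suc T) else 0)) = d T * g (Suc T)"
        using False by (simp add: sum.delta)
      finally show ?thesis .
    qed
    finally show ?thesis using Suc e by (simp add: algebra_simps)
  qed
qed

lemma expand:
  assumes st: "\<forall>t\<in>{1..T}. res a b T x t = a * th t"
  shows "cost a b T th y = cost a b T th x + Qf a b T (\<lambda>t. y t - x t)"
proof -
  define d where "d = (\<lambda>t. y t - x t)"
  define g where "g = (\<lambda>t. b * (x t - ext x (t-1)))"
  have ed: "ext y t = ext x t + ext d t" for t by (simp add: ext_def d_def)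
  have yx: "y t = x t + d t" for t by (simp add: d_def)
  have "cost a b T th y = (\<Sum>t=1..T. (a/2 * (x t - th t)^2 + b/2 * (x t - ext x (t-1))^2)
        + (a/2 * (d t)^2 + b/2 * (d t - ext d (t-1))^2)
        + (a * (x t - th t) * d t + g t * (d t - ext d (t-1))))"
    unfolding cost_alt
    by (rule sum.cong) (auto simp: ed yx g_def power2_eq_square algebra_simps)
  also have "\<dots> = cost a b T th x + Qf a b T d + (\<Sum>t=1..T. a * (x t - th t) * d t + g t * (d t - ext d (t-1)))"
    unfolding cost_alt Qf_def by (simp add: sum.distrib)
  also have "(\<Sum>t=1..T. a * (x t - th t) * d t + g t * (d t - ext d (t-1)))
      = (\<Sum>t=1..T. a * (x t - th t) * d t) + (\<Sum>t=1..T. d t * (g t - (if t < T then g (t+1) else 0)))"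
    using sbp[of g d T] by (simp add: sum.distrib)
  also have "\<dots> = (\<Sum>t=1..T. d t * (res a b T x t - a * th t))"
    unfolding sum.distrib[symmetric]
    by (rule sum.cong) (auto simp: res_def g_def ext_def algebra_simps)
  also have "\<dots> = 0" using st by simp
  finally show ?thesis by (simp add: d_def)
qed

lemma Qf_nonneg: "a > 0 \<Longrightarrow> b > 0 \<Longrightarrow> Qf a b T d \<ge> 0"
  unfolding Qf_def by (intro sum_nonneg) auto

lemma Qf_zero:
  assumes "a > 0" "b > 0" "Qf a b T d \<le> 0" "t \<in> {1..T}"
  shows "d t = 0"
proof -
  have nn: "\<forall>i\<in>{1..T}. 0 \<le> a/2 * (d i)^2 + b/2 * (d i - ext d (i-1))^2"
    using assms by auto
  have "Qf a b T d = 0" using Qf_nonneg[of a b T d] assms by linarith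
  hence "\<forall>i\<in>{1..T}. a/2 * (d i)^2 + b/2 * (d i - ext d (i-1))^2 = 0"
    using sum_nonneg_eq_0_iff[of "{1..T}" "\<lambda>i. a/2 * (d i)^2 + b/2 * (d i - ext d (i-1))^2"] nn
    unfolding Qf_def by blast
  hence "a/2 * (d t)^2 + b/2 * (d t - ext d (t-1))^2 = 0" using assms(4) by blast
  moreover have "0 \<le> b/2 * (d t - ext d (t-1))^2" using assms by auto
  moreover have "0 \<le> a/2 * (d t)^2" using assms by auto
  ultimately have "a/2 * (d t)^2 = 0" by linarith
  thus ?thesis using assms by simp
qed

definition clip :: "real \<Rightarrow> real \<Rightarrow> real" where
  "clip D v = max (-D/2) (min (D/2) v)"

lemma clip_lip: "D > 0 \<Longrightarrow> \<bar>clip D u - clip D v\<bar> \<le> \<bar>u - v\<bar>"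
  unfolding clip_def by auto

lemma sq_mono: "\<bar>u\<bar> \<le> \<bar>v\<bar> \<Longrightarrow> (u::real)^2 \<le> v^2"
  by (metis abs_ge_zero power2_abs power_mono)

lemma clip_cost:
  assumes "a > 0" "b > 0" "D > 0" "in_box D T th"
  shows "cost a b T th (\<lambda>t. clip D (x t)) \<le> cost a b T th x"
  unfolding cost_alt
proof (rule sum_mono)
  fix t assume t: "t \<in> {1..T}"
  have cth: "clip D (th t) = th t" using assms(4) t unfolding in_box_def clip_def by auto
  have e: "ext (\<lambda>t. clip D (x t)) (t-1) = clip D (ext x (t-1))"
    using assms(3) by (simp add: ext_def clip_def)
  have 1: "(clip D (x t) - th t)^2 \<le> (x t - th t)^2"
    using clip_lip[OF assms(3), of "x t" "th t"] cth by (simp add: sq_mono)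
  have 2: "(clip D (x t) - clip D (ext x (t-1)))^2 \<le> (x t - ext x (t-1))^2"
    using clip_lip[OF assms(3)] by (simp add: sq_mono)
  show "a/2 * (clip D (x t) - th t)^2 + b/2 * (clip D (x t) - ext (\<lambda>t. clip D (x t)) (t-1))^2
        \<le> a/2 * (x t - th t)^2 + b/2 * (x t - ext x (t-1))^2"
    unfolding e using 1 2 assms by (intro add_mono mult_left_mono) auto
qed

lemma min_principle:
  assumes a: "a > 0" and b: "b > 0" and h: "\<forall>t\<in>{1..T}. res a b T z t \<ge> 0"
  shows "\<forall>t\<in>{1..T}. z t \<ge> 0"
proof (cases "T = 0")
  case True then show ?thesis by simp
next
  case False
  define m where "m = Min (z ` {1..T})"
  have ne: "z ` {1..T} \<noteq> {}" using False by auto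
  have mle: "\<And>t. t \<in> {1..T} \<Longrightarrow> m \<le> z t" unfolding m_def by simp
  obtain t0 where t0: "t0 \<in> {1..T}" "z t0 = m"
    using Min_in[OF _ ne] unfolding m_def by auto
  show ?thesis
  proof (rule ccontr)
    assume "\<not> ?thesis"
    then obtain t1 where "t1 \<in> {1..T}" "z t1 < 0" by auto
    hence mneg: "m < 0" using mle by fastforce
    have e: "ext z (t0 - 1) \<ge> m"
    proof (cases "t0 - 1 = 0")
      case True then show ?thesis using mneg by (simp add: ext_def)
    next
      case False
      then have "t0 - 1 \<in> {1..T}" using t0(1) by auto
      then show ?thesis using mle False by (simp add: ext_def)
    qed
    have r: "res a b T z t0 \<ge> 0" using h t0(1) by blast
    show False
    proof (cases "t0 < T")
      case True
      have n: "z (t0+1) \<ge> m" using mle True by auto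
      have "b * ext z (t0-1) \<ge> b * m" using e b by simp
      moreover have "b * z (t0+1) \<ge> b * m" using n b by simp
      moreover have "(a + 2*b) * m - b * ext z (t0-1) - b * z (t0+1) \<ge> 0"
        using r True t0 by (simp add: res_def)
      ultimately have "a * m \<ge> 0" by (simp add: algebra_simps)
      thus False using a mneg by (simp add: mult_pos_neg zero_le_mult_iff)
    next
      case False
      have "b * ext z (t0-1) \<ge> b * m" using e b by simp
      moreover have "(a + b) * m - b * ext z (t0-1) \<ge> 0"
        using r False t0 by (simp add: res_def)
      ultimately have "a * m \<ge> 0" by (simp add: algebra_simps)
      thus False using a mneg by (simp add: zero_le_mult_iff)
    qed
  qed
qed


fun shoot :: "real \<Rightarrow> real \<Rightarrow> (nat \<Rightarrow> real) \<Rightarrow> real \<Rightarrow> nat \<Rightarrow> real" where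
  "shoot a b c l 0 = 0"
| "shoot a b c l (Suc 0) = l"
| "shoot a b c l (Suc (Suc n)) = ((a + 2*b) * shoot a b c l (Suc n) - b * shoot a b c l n - c (Suc n)) / b"

lemma shoot_lin: "b > 0 \<Longrightarrow> shoot a b c l n = l * shoot a b (\<lambda>_. 0) 1 n + shoot a b c 0 n"
  by (induction a b c l n rule: shoot.induct) (auto simp: field_simps)

lemma ext_z0: "z 0 = 0 \<Longrightarrow> ext z k = z k"
  by (simp add: ext_def)

lemma shoot_mono:
  assumes "a > 0" "b > 0"
  shows "0 \<le> shoot a b (\<lambda>_. 0) 1 n \<and> shoot a b (\<lambda>_. 0) 1 n \<le> shoot a b (\<lambda>_. 0) 1 (Suc n)"
proof (induction n)
  case 0 then show ?case by simp
next
  case (Suc n)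
  define P where "P = shoot a b (\<lambda>_. 0) 1"
  have IH: "0 \<le> P n" "P n \<le> P (Suc n)" using Suc by (auto simp: P_def)
  have "P (Suc (Suc n)) - P (Suc n) = (a * P (Suc n) + b * (P (Suc n) - P n)) / b"
    using assms by (simp add: P_def field_simps)
  moreover have "a * P (Suc n) + b * (P (Suc n) - P n) \<ge> 0"
    using IH assms by (intro add_nonneg_nonneg mult_nonneg_nonneg) auto
  ultimately have "P (Suc (Suc n)) - P (Suc n) \<ge> 0" using assms
    by (simp add: divide_nonneg_pos)
  hence "P (Suc (Suc n)) \<ge> P (Suc n)" by linarith
  then show ?case using IH unfolding P_def by linarith
qed

lemma shoot_ge1:
  assumes "a > 0" "b > 0" "n \<ge> 1"
  shows "shoot a b (\<lambda>_. 0) 1 n \<ge> 1"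
  using assms(3)
proof (induction n rule: dec_induct)
  case base then show ?case by simp
next
  case (step n) then show ?case using shoot_mono[OF assms(1,2), of n] by linarith
qed

lemma shoot_res:
  assumes "b > 0" "1 \<le> t" "t < T"
  shows "res a b T (shoot a b c l) t = c t"
proof -
  obtain n where n: "t = Suc n" using assms(2) by (cases t) auto
  show ?thesis using assms n
    by (simp add: res_def ext_z0 field_simps)
qed

lemma exists_sol:
  assumes a: "a > 0" and b: "b > 0" and T: "T \<ge> 1"
  shows "\<exists>z. \<forall>t\<in>{1..T}. res a b T z t = c t"
proof -
  define P where "P = shoot a b (\<lambda>_. 0) 1"
  define R where "R = shoot a b c 0"
  define co where "co = (a + b) * P T - b * P (T - 1)"
  have P1: "P T \<ge> 1" using shoot_ge1[OF a b T] by (simp add: P_def)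
  have Pm: "P (T-1) \<le> P T" using shoot_mono[OF a b, of "T-1"] T by (simp add: P_def)
  have "co = a * P T + b * (P T - P (T-1))" by (simp add: co_def algebra_simps)
  moreover have "a * P T > 0" using a P1 by simp
  moreover have "b * (P T - P (T-1)) \<ge> 0" using b Pm by simp
  ultimately have co: "co > 0" by linarith
  define l where "l = (c T - ((a + b) * R T - b * R (T - 1))) / co"
  define z where "z = shoot a b c l"
  have zl: "z k = l * P k + R k" for k unfolding z_def P_def R_def using b by (rule shoot_lin)
  have "\<forall>t\<in>{1..T}. res a b T z t = c t"
  proof
    fix t assume t: "t \<in> {1..T}"
    show "res a b T z t = c t"
    proof (cases "t < T")
      case True then show ?thesis using t shoot_res[OF b, of t T a c l] by (simp add: z_def)
    next
      case False
      hence tT: "t = T" using t by simp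
      have "res a b T z t = (a + b) * z T - b * z (T - 1)"
        using tT by (simp add: res_def ext_z0 z_def)
      also have "\<dots> = l * co + ((a + b) * R T - b * R (T - 1))"
        by (simp add: zl co_def algebra_simps)
      also have "\<dots> = c t" using co tT by (simp add: l_def)
      finally show ?thesis .
    qed
  qed
  then show ?thesis by blast
qed

lemma res_diff: "res a b T (\<lambda>t. z t - w t) t = res a b T z t - res a b T w t"
  by (simp add: res_def ext_def algebra_simps)

lemma res_sum:
  "res a b T (\<lambda>t. \<Sum>s\<in>S. f s * z s t) t = (\<Sum>s\<in>S. f s * res a b T (z s) t)"
proof -
  have e: "ext (\<lambda>t. \<Sum>s\<in>S. f s * z s t) k = (\<Sum>s\<in>S. f s * ext (z s) k)" for k
    by (simp add: ext_def)
  have 1: "(\<Sum>s\<in>S. f s * (X s - Y s - W s)) = (\<Sum>s\<in>S. f s * X s) - (\<Sum>s\<in>S. f s * Y s) - (\<Sum>s\<in>S. f s * W s)"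
    for X Y W :: "'a \<Rightarrow> real"
    by (simp add: right_diff_distrib sum_subtractf)
  have 2: "(\<Sum>s\<in>S. f s * (X s - Y s)) = (\<Sum>s\<in>S. f s * X s) - (\<Sum>s\<in>S. f s * Y s)"
    for X Y :: "'a \<Rightarrow> real"
    by (simp add: right_diff_distrib sum_subtractf)
  have 3: "(\<Sum>s\<in>S. f s * (k * X s)) = k * (\<Sum>s\<in>S. f s * X s)" for k and X :: "'a \<Rightarrow> real"
    by (simp add: sum_distrib_left algebra_simps)
  show ?thesis
    unfolding res_def e by (simp add: 1 2 3)
qed


lemma rho_facts:
  fixes a b :: real
  assumes a: "a > 0" and b: "b > 0"
  defines "q \<equiv> sqrt ((a + 4*b)/a)"
  defines "r \<equiv> (q - 1) / (q + 1)"
  shows "0 < r" "r < 1" "b * r^2 - (a + 2*b) * r + b = 0"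
proof -
  have Q1: "(a + 4*b)/a > 1" using a b by (simp add: field_simps)
  have q1: "q > 1" unfolding q_def using Q1 by (simp add: real_less_rsqrt)
  have qsq: "q^2 = (a + 4*b)/a" unfolding q_def using Q1 by simp
  have aq: "a * q^2 = a + 4*b" using qsq a by (simp add: field_simps)
  show "0 < r" unfolding r_def using q1 by simp
  show "r < 1" unfolding r_def using q1 by simp
  have rq1: "r * (q+1) = q - 1" unfolding r_def using q1 by simp
  have "(q+1)^2 * (b * r^2 - (a + 2*b) * r + b) = b*(r*(q+1))^2 - (a+2*b)*(r*(q+1))*(q+1) + b*(q+1)^2"
    by (simp add: power2_eq_square algebra_simps)
  also have "\<dots> = b*(q-1)^2 - (a+2*b)*(q-1)*(q+1) + b*(q+1)^2" unfolding rq1 ..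
  also have "b*(q-1)^2 - (a+2*b)*(q-1)*(q+1) + b*(q+1)^2 = a + 4*b - a * q^2"
    by (simp add: power2_eq_square algebra_simps)
  also have "\<dots> = 0" using aq by simp
  finally show "b * r^2 - (a + 2*b) * r + b = 0" using q1 by simp
qed

lemma geo_id:
  fixes a b r :: real
  assumes "b * r^2 - (a + 2*b) * r + b = 0"
  shows "(a + 2*b) * r^(Suc k) - b * r^(Suc (Suc k)) - b * r^k = 0"
proof -
  have "(a + 2*b) * r^(Suc k) - b * r^(Suc (Suc k)) - b * r^k = -(r^k * (b * r^2 - (a + 2*b) * r + b))"
    by (simp add: power2_eq_square algebra_simps)
  then show ?thesis using assms by simp
qed

lemma barrier:
  fixes a b r :: real
  assumes a: "a > 0" and b: "b > 0" and r0: "0 < r" and r1: "r < 1"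
    and rq: "b * r^2 - (a + 2*b) * r + b = 0"
    and s: "s \<in> {1..T}"
  defines "w \<equiv> (\<lambda>t. if t \<le> s then a * r / b * (r^(s-t) - r^(s+t)) else 0)"
  shows "\<forall>t\<in>{1..T}. res a b T w t \<le> a * (if t = s then 1 else 0)"
    and "\<And>t. w t \<ge> 0"
    and "\<And>t. 1 \<le> t \<Longrightarrow> t \<le> s \<Longrightarrow> w t \<ge> a / (a + b) * (1 - r) * r^(s-t)"
proof -
  define K where "K = a * r / b"
  have K0: "K > 0" using a b r0 by (simp add: K_def)
  have w0: "w 0 = 0" by (simp add: w_def)
  have ew: "ext w k = w k" for k using w0 by (simp add: ext_def)
  show wnn: "w t \<ge> 0" for t
  proof (cases "t \<le> s")
    case True
    have "r^(s+t) \<le> r^(s-t)" using r0 r1 by (intro power_decreasing) auto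
    then show ?thesis using True K0 by (simp add: w_def K_def[symmetric])
  next
    case False then show ?thesis by (simp add: w_def)
  qed
  show "\<forall>t\<in>{1..T}. res a b T w t \<le> a * (if t = s then 1 else 0)"
  proof
    fix t assume t: "t \<in> {1..T}"
    consider "t < s" | "t = s" | "t > s" by linarith
    then show "res a b T w t \<le> a * (if t = s then 1 else 0)"
    proof cases
      case 1
      obtain k where k: "s - t = Suc k" using 1 by (metis Suc_diff_Suc)
      obtain m where m: "s + t = Suc m" using t by (cases "s+t") auto
      have tT: "t < T" using 1 s by auto
      have e1: "s - (t - 1) = Suc (Suc k)" using k t 1 by auto
      have e2: "s + (t - 1) = m" using m t by auto
      have e3: "s - (t + 1) = k" using k by auto
      have e4: "s + (t + 1) = Suc (Suc m)" using m by auto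
      have "res a b T w t = (a + 2*b) * w t - b * w (t-1) - b * w (t+1)"
        using tT by (simp add: res_def ew)
      also have "\<dots> = K * ((a + 2*b) * r^(Suc k) - b * r^(Suc (Suc k)) - b * r^k)
                   - K * ((a + 2*b) * r^(Suc m) - b * r^(Suc (Suc m)) - b * r^m)"
        using 1 k m e1 e2 e3 e4 by (simp add: w_def K_def[symmetric] algebra_simps)
      also have "\<dots> = 0" using geo_id[OF rq] by simp
      finally show ?thesis using 1 by simp
    next
      case 2
      obtain j where j: "s = Suc j" using s by (cases s) auto
      have ws: "w s = K * (1 - r^(Suc (Suc (2*j))))" using j by (simp add: w_def K_def[symmetric] mult_2 power_add)
      have ws1: "w (s - 1) = K * (r - r^(Suc (2*j)))"
        using j by (simp add: w_def K_def[symmetric] mult_2)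
      have "res a b T w t \<le> (a + 2*b) * w s - b * w (s - 1)"
      proof -
        have ws0: "w (s+1) = 0" by (simp add: w_def)
        have "(a + b) * w s \<le> (a + 2 * b) * w s" using wnn[of s] b by (intro mult_right_mono) auto
        then show ?thesis using 2 wnn[of s] b ws0 by (auto simp: res_def ew)
      qed
      also have "\<dots> = K * ((a + 2*b) - b * r) - K * r^(Suc (2*j)) * ((a + 2*b) * r - b)"
        unfolding ws ws1 by (simp add: algebra_simps)
      also have "K * ((a + 2*b) - b * r) = a"
      proof -
        have "(a + 2*b) * r - b * r^2 = b" using rq by simp
        then show ?thesis using b by (simp add: K_def field_simps power2_eq_square)
      qed
      also have "(a + 2*b) * r - b = b * r^2" using rq by simp
      finally have "res a b T w t \<le> a - K * r^(Suc (2*j)) * (b * r^2)" .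
      moreover have "K * r^(Suc (2*j)) * (b * r^2) \<ge> 0" using K0 r0 b by simp
      ultimately show ?thesis using 2 by simp
    next
      case 3
      have z1: "w t = 0" "w (t+1) = 0" using 3 by (auto simp: w_def)
      have "res a b T w t = - b * w (t - 1)"
        using 3 z1 by (simp add: res_def ew)
      also have "\<dots> \<le> 0" using wnn[of "t-1"] b by simp
      finally show ?thesis using 3 by simp
    qed
  qed
  show "w t \<ge> a / (a + b) * (1 - r) * r^(s-t)" if t1: "1 \<le> t" and ts: "t \<le> s" for t
  proof -
    have "r^(s+t) = r^(s-t) * r^(2*t)" using ts by (simp add: power_add[symmetric] add.commute)
    moreover have "r^(2*t) \<le> r^2" using r0 r1 t1 by (intro power_decreasing) auto
    ultimately have "r^(s+t) \<le> r^(s-t) * r^2"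
      using r0 by (simp add: mult_left_mono)
    hence "w t \<ge> K * (r^(s-t) * (1 - r^2))"
      using ts K0 by (simp add: w_def K_def[symmetric] algebra_simps mult_left_mono)
    moreover have "K * (1 - r^2) \<ge> a / (a + b) * (1 - r)"
    proof -
      have "r * (1 + r) * (a + b) - b - b * r^3 = -((1 + r) * (b * r^2 - (a + 2*b) * r + b))"
        by (simp add: power2_eq_square power3_eq_cube algebra_simps)
      hence key: "r * (1 + r) * (a + b) - b = b * r^3" using rq by simp
      moreover have "b * r^3 \<ge> 0" using b r0 by simp
      ultimately have "r * (1 + r) * (a + b) \<ge> b" by linarith
      hence "r * (1 + r) / b \<ge> 1 / (a + b)" using a b by (simp add: field_simps)
      hence "a * (1 - r) * (r * (1 + r) / b) \<ge> a * (1 - r) * (1 / (a + b))"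
        using a r1 by (intro mult_left_mono) auto
      moreover have "K * (1 - r^2) = a * (1 - r) * (r * (1 + r) / b)"
        by (simp add: K_def power2_eq_square algebra_simps)
      ultimately show ?thesis by simp
    qed
    moreover have "K * (1 - r^2) * r^(s-t) \<ge> a / (a + b) * (1 - r) * r^(s-t)"
      using calculation(2) r0 by (intro mult_right_mono) auto
    ultimately show ?thesis by (simp add: algebra_simps)
  qed
qed

theorem lemma5:
  fixes \<alpha> \<beta> D :: real and T :: nat and \<theta> :: "nat \<Rightarrow> real"
  assumes "\<alpha> > 0" "\<beta> > 0" "D > 0" "T \<ge> 1"
    and "in_box D T \<theta>"
  shows "\<exists>A :: nat \<Rightarrow> nat \<Rightarrow> real.
           is_argmin \<alpha> \<beta> D T \<theta> (matvec T A \<theta>)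
         \<and> (\<forall>x. is_argmin \<alpha> \<beta> D T \<theta> x \<longrightarrow> (\<forall>t\<in>{1..T}. x t = matvec T A \<theta> t))
         \<and> (\<forall>t \<tau>. 1 \<le> t \<and> t + \<tau> \<le> T \<longrightarrow>
              A t (t + \<tau>) \<ge>
                \<alpha> / (\<alpha> + \<beta>) * (1 - (sqrt ((\<alpha> + 4*\<beta>)/\<alpha>) - 1) / (sqrt ((\<alpha> + 4*\<beta>)/\<alpha>) + 1))
                * ((sqrt ((\<alpha> + 4*\<beta>)/\<alpha>) - 1) / (sqrt ((\<alpha> + 4*\<beta>)/\<alpha>) + 1)) ^ \<tau>)"
proof -
  note a = assms(1) and b = assms(2) and Dp = assms(3) and T1 = assms(4) and thb = assms(5)
  define q where "q = sqrt ((\<alpha> + 4*\<beta>)/\<alpha>)"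
  define r where "r = (q - 1) / (q + 1)"
  have r0: "0 < r" and r1: "r < 1" and rq: "\<beta> * r^2 - (\<alpha> + 2*\<beta>) * r + \<beta> = 0"
    using rho_facts[OF a b] unfolding r_def q_def by auto
  define col where "col s = (SOME z. \<forall>t\<in>{1..T}. res \<alpha> \<beta> T z t = \<alpha> * (if t = s then 1 else 0))" for s
  have colp: "\<forall>t\<in>{1..T}. res \<alpha> \<beta> T (col s) t = \<alpha> * (if t = s then 1 else 0)" for s
    unfolding col_def by (rule someI_ex[OF exists_sol[OF a b T1]])
  define A where "A t s = col s t" for t s
  define x where "x = matvec T A \<theta>"
  have xs: "x = (\<lambda>t. \<Sum>s\<in>{1..T}. \<theta> s * col s t)"
    by (simp add: x_def matvec_def A_def mult.commute)
  have st: "\<forall>t\<in>{1..T}. res \<alpha> \<beta> T x t = \<alpha> * \<theta> t"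
  proof
    fix t assume t: "t \<in> {1..T}"
    have "res \<alpha> \<beta> T x t = (\<Sum>s\<in>{1..T}. \<theta> s * res \<alpha> \<beta> T (col s) t)"
      unfolding xs by (rule res_sum)
    also have "\<dots> = (\<Sum>s\<in>{1..T}. if s = t then \<alpha> * \<theta> s else 0)"
    proof (rule sum.cong)
      fix s assume "s \<in> {1..T}"
      show "\<theta> s * res \<alpha> \<beta> T (col s) t = (if s = t then \<alpha> * \<theta> s else 0)"
        using colp[of s] t by auto
    qed simp
    also have "\<dots> = \<alpha> * \<theta> t" using t by (simp add: sum.delta)
    finally show "res \<alpha> \<beta> T x t = \<alpha> * \<theta> t" .
  qed
  have exp: "cost \<alpha> \<beta> T \<theta> y = cost \<alpha> \<beta> T \<theta> x + Qf \<alpha> \<beta> T (\<lambda>t. y t - x t)" for y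
    using expand[OF st] .
  have box: "in_box D T x"
  proof -
    define xc where "xc = (\<lambda>t. clip D (x t))"
    have "cost \<alpha> \<beta> T \<theta> xc \<le> cost \<alpha> \<beta> T \<theta> x"
      unfolding xc_def by (rule clip_cost[OF a b Dp thb])
    hence "Qf \<alpha> \<beta> T (\<lambda>t. xc t - x t) \<le> 0" using exp[of xc] by simp
    hence "xc t - x t = 0" if "t \<in> {1..T}" for t using Qf_zero[OF a b _ that] by blast
    moreover have "xc t \<in> {-D/2..D/2}" for t unfolding xc_def clip_def using Dp by auto
    ultimately show ?thesis unfolding in_box_def by (metis eq_iff_diff_eq_0)
  qed
  have am: "is_argmin \<alpha> \<beta> D T \<theta> x"
  proof -
    have "cost \<alpha> \<beta> T \<theta> x \<le> cost \<alpha> \<beta> T \<theta> y" for y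
    proof -
      have "0 \<le> Qf \<alpha> \<beta> T (\<lambda>t. y t - x t)" by (rule Qf_nonneg[OF a b])
      then show ?thesis unfolding exp[of y] by linarith
    qed
    then show ?thesis unfolding is_argmin_def using box by blast
  qed
  have uniq: "\<forall>y. is_argmin \<alpha> \<beta> D T \<theta> y \<longrightarrow> (\<forall>t\<in>{1..T}. y t = x t)"
  proof (intro allI impI ballI)
    fix y t assume y: "is_argmin \<alpha> \<beta> D T \<theta> y" and t: "t \<in> {1..T}"
    have "cost \<alpha> \<beta> T \<theta> y \<le> cost \<alpha> \<beta> T \<theta> x" using y box unfolding is_argmin_def by blast
    hence "Qf \<alpha> \<beta> T (\<lambda>t. y t - x t) \<le> 0" using exp[of y] by simp
    then show "y t = x t" using Qf_zero[OF a b _ t] by fastforce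
  qed
  have bnd: "A t (t + \<tau>) \<ge> \<alpha> / (\<alpha> + \<beta>) * (1 - r) * r ^ \<tau>" if h: "1 \<le> t \<and> t + \<tau> \<le> T" for t \<tau>
  proof -
    define s where "s = t + \<tau>"
    have s: "s \<in> {1..T}" using h by (auto simp: s_def)
    define w where "w = (\<lambda>t. if t \<le> s then \<alpha> * r / \<beta> * (r^(s-t) - r^(s+t)) else 0)"
    have wres: "\<forall>t\<in>{1..T}. res \<alpha> \<beta> T w t \<le> \<alpha> * (if t = s then 1 else 0)"
      using barrier(1)[OF a b r0 r1 rq s] unfolding w_def .
    have wlb: "w t \<ge> \<alpha> / (\<alpha> + \<beta>) * (1 - r) * r^(s-t)"
      using barrier(3)[OF a b r0 r1 rq s, of t] h unfolding w_def s_def by auto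
    have "\<forall>u\<in>{1..T}. res \<alpha> \<beta> T (\<lambda>u. col s u - w u) u \<ge> 0"
      using wres colp[of s] by (simp add: res_diff)
    hence "\<forall>u\<in>{1..T}. col s u - w u \<ge> 0" by (rule min_principle[OF a b])
    hence "col s t \<ge> w t" using h s_def by auto
    then show ?thesis using wlb by (simp add: A_def s_def)
  qed
  show ?thesis
    apply (rule exI[of _ A])
    using am uniq bnd unfolding x_def r_def q_def by auto
qed

end
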